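(* Let $p\in[1,\infty)$ and $f\in L_p(\mathbb R)$. Then $\lim_{|x|\to\infty}(Gf)(x)=0$ and $\lim_{|x|\to\infty}\frac{d}{dx}(Gf)(x)=0$.
   Context: Let $q:\mathbb R\to\mathbb R$ be measurable with $q\in L_1^{\mathrm{loc}}(\mathbb R)$ and $q(x)\ge1$ a.e. A principal fundamental system of solutions (PFSS) of $z''=q(x)z$ is a pair $u,v$ of solutions ($C^1$, derivative locally absolutely continuous, equation a.e.) such that for all $x$: $u>0$, $v>0$, $u'<0$, $v'>0$, $v'u-u'v=1$, $u(x)=v(x)\int_x^\infty v(t)^{-2}dt$, and $u,u'\to0$ as $x\to\infty$, $v,v'\to0$ as $x\to-\infty$, $v,v'\to\infty$ as $x\to\infty$, $u,|u'|\to\infty$ as $x\to-\infty$. Fix a PFSS $\{u,v\}$. The Green function is $G(x,t)=u(x)v(t)$ for $x\ge t$ and $G(x,t)=u(t)v(x)$ for $x\le t$, and $(Gf)(x)=\int_{-\infty}^\infty G(x,t)f(t)\,dt$. *)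

theory Defs
  imports "HOL-Analysis.Analysis"
begin

definition admissible_potential :: "(real \<Rightarrow> real) \<Rightarrow> bool" where
  "admissible_potential q \<longleftrightarrow>
     q \<in> borel_measurable lborel \<and>
     (\<forall>a b. set_integrable lborel {a..b} q) \<and>
     (AE x in lborel. 1 \<le> q x)"

text \<open>z is a solution of z'' = q z with derivative z': z is C^1 with derivative z',
  and z' is locally absolutely continuous with z'' = q z a.e.; the latter is written
  in its integral form z'(y) - z'(x) = integral of q z over [x,y].\<close>
definition is_solution ::
  "(real \<Rightarrow> real) \<Rightarrow> (real \<Rightarrow> real) \<Rightarrow> (real \<Rightarrow> real) \<Rightarrow> bool" where
  "is_solution q z z' \<longleftrightarrow>
     (\<forall>x. (z has_real_derivative z' x) (at x)) \<and>
     continuous_on UNIV z' \<and>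
     (\<forall>x y. x \<le> y \<longrightarrow>
        set_integrable lborel {x..y} (\<lambda>t. q t * z t) \<and>
        z' y - z' x = (LINT t:{x..y}|lborel. q t * z t))"

definition PFSS ::
  "(real \<Rightarrow> real) \<Rightarrow> (real \<Rightarrow> real) \<Rightarrow> (real \<Rightarrow> real) \<Rightarrow>
   (real \<Rightarrow> real) \<Rightarrow> (real \<Rightarrow> real) \<Rightarrow> bool" where
  "PFSS q u u' v v' \<longleftrightarrow>
     is_solution q u u' \<and> is_solution q v v' \<and>
     (\<forall>x. u x > 0 \<and> v x > 0 \<and> u' x < 0 \<and> v' x > 0 \<and>
          v' x * u x - u' x * v x = 1 \<and>
          set_integrable lborel {x..} (\<lambda>t. 1 / (v t)\<^sup>2) \<and>
          u x = v x * (LINT t:{x..}|lborel. 1 / (v t)\<^sup>2)) \<and>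
     (u \<longlongrightarrow> 0) at_top \<and> (u' \<longlongrightarrow> 0) at_top \<and>
     (v \<longlongrightarrow> 0) at_bot \<and> (v' \<longlongrightarrow> 0) at_bot \<and>
     filterlim v at_top at_top \<and> filterlim v' at_top at_top \<and>
     filterlim u at_top at_bot \<and> filterlim (\<lambda>x. \<bar>u' x\<bar>) at_top at_bot"

definition green :: "(real \<Rightarrow> real) \<Rightarrow> (real \<Rightarrow> real) \<Rightarrow> real \<Rightarrow> real \<Rightarrow> real" where
  "green u v x t = (if t \<le> x then u x * v t else u t * v x)"

definition green_op ::
  "(real \<Rightarrow> real) \<Rightarrow> (real \<Rightarrow> real) \<Rightarrow> (real \<Rightarrow> real) \<Rightarrow> real \<Rightarrow> real" where
  "green_op u v f x = (LINT t|lborel. green u v x t * f t)"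

definition in_Lp :: "real \<Rightarrow> (real \<Rightarrow> real) \<Rightarrow> bool" where
  "in_Lp p f \<longleftrightarrow> f \<in> borel_measurable lborel \<and> integrable lborel (\<lambda>x. \<bar>f x\<bar> powr p)"

end

theory Submission
  imports Defs "HOL-Probability.Sinc_Integral" "HOL-Real_Asymp.Real_Asymp"
begin

lemma kern_integrable: "integrable lborel (\<lambda>s::real. exp (- \<bar>s\<bar>))"
proof -
  let ?g = "\<lambda>x::real. exp (-x) * indicator {0 ..} x"
  have g: "integrable lborel ?g"
    using has_bochner_integral_I0i_power_exp_m'[of 0] by (simp add: integrable.intros)
  have g2: "integrable lborel (\<lambda>x. ?g (0 + (-1) * x))"
    using lborel_integrable_real_affine_iff[of "-1" ?g 0] g by simp
  have "integrable lborel (\<lambda>x. ?g x + ?g (0 + (-1) * x))"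
    using g g2 by (rule Bochner_Integration.integrable_add)
  then show ?thesis
    apply (rule Bochner_Integration.integrable_bound)
     apply measurable
    apply (rule AE_I2)
    apply (auto split: split_indicator)
    done
qed

lemma kern_shift_integrable: "integrable lborel (\<lambda>t::real. exp (- \<bar>x - t\<bar>))"
  using lborel_integrable_real_affine_iff[of "-1" "\<lambda>s. exp (- \<bar>s\<bar>)" x] kern_integrable by simp

lemma kern_shift_integral: "(LINT t|lborel. exp (- \<bar>(x::real) - t\<bar>)) = (LINT s|lborel. exp (- \<bar>s\<bar>))"
  using lborel_integral_real_affine[of "-1" "\<lambda>s. exp (- \<bar>s\<bar>)" x] by simp

lemma gronwall_top:
  fixes \<phi> :: "real \<Rightarrow> real"
  assumes cont: "continuous_on UNIV \<phi>"
    and ineq: "\<And>x y. x \<le> y \<Longrightarrow> \<phi> y - \<phi> x \<ge> (LINT t:{x..y}|lborel. \<phi> t)"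
    and lim: "(\<phi> \<longlongrightarrow> 0) at_top"
  shows "\<phi> x \<le> 0"
proof (rule ccontr)
  assume "\<not> \<phi> x \<le> 0"
  then have c: "\<phi> x > 0" by simp
  define c where "c = \<phi> x"
  have "eventually (\<lambda>y. \<phi> y < c/2) at_top"
    using lim c unfolding c_def by (intro order_tendstoD) auto
  then obtain N where N: "\<And>y. y \<ge> N \<Longrightarrow> \<phi> y < c/2"
    by (auto simp: eventually_at_top_linorder)
  define y1 where "y1 = max N (x+1)"
  have y1: "x \<le> y1" "\<phi> y1 < c/2" using N unfolding y1_def by auto
  define S where "S = {x..y1} \<inter> \<phi> -` {..c/2}"
  have iC: "\<And>x. isCont \<phi> x" using cont by (simp add: continuous_on_eq_continuous_at)
  have clS: "closed S" unfolding S_def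
    by (intro closed_Int closed_atLeastAtMost continuous_closed_vimage iC closed_atMost)
  have "y1 \<in> S" using y1 unfolding S_def by auto
  then have neS: "S \<noteq> {}" by auto
  have bdd: "bdd_below S" unfolding S_def by (rule bdd_belowI[of _ x]) auto
  define z where "z = Inf S"
  have zS: "z \<in> S" unfolding z_def by (rule closed_contains_Inf[OF neS bdd clS])
  then have xz: "x \<le> z" and phz: "\<phi> z \<le> c/2" unfolding S_def by auto
  have below: "\<phi> s > c/2" if "x \<le> s" "s < z" for s
  proof (rule ccontr)
    assume "\<not> \<phi> s > c/2"
    then have "s \<in> S" using that zS unfolding S_def by auto
    then have "z \<le> s" unfolding z_def using bdd by (rule cInf_lower)
    then show False using that by simp
  qed
  have "0 \<le> (LINT t:{x..z}|lborel. \<phi> t)"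
    unfolding set_lebesgue_integral_def
  proof (rule integral_nonneg_AE)
    show "AE t in lborel. 0 \<le> indicator {x..z} t *\<^sub>R \<phi> t"
      using AE_lborel_singleton[of z]
    proof eventually_elim
      case (elim t)
      then show ?case using below[of t] c unfolding c_def
        by (auto split: split_indicator)
    qed
  qed
  with ineq[OF xz] have "\<phi> z \<ge> c" unfolding c_def by simp
  with phz c show False unfolding c_def by simp
qed

lemma gronwall_bot:
  fixes \<psi> :: "real \<Rightarrow> real"
  assumes cont: "continuous_on UNIV \<psi>"
    and ineq: "\<And>x y. x \<le> y \<Longrightarrow> \<psi> y - \<psi> x \<ge> - (LINT t:{x..y}|lborel. \<psi> t)"
    and lim: "(\<psi> \<longlongrightarrow> 0) at_bot"
  shows "\<psi> y \<ge> 0"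
proof (rule ccontr)
  assume "\<not> \<psi> y \<ge> 0"
  then have c: "\<psi> y < 0" by simp
  define c where "c = - \<psi> y"
  have cpos: "c > 0" using c unfolding c_def by simp
  have "eventually (\<lambda>x. \<psi> x > - c/2) at_bot"
    using lim cpos by (intro order_tendstoD) auto
  then obtain N where N: "\<And>x. x \<le> N \<Longrightarrow> \<psi> x > - c/2"
    by (auto simp: eventually_at_bot_linorder)
  define x1 where "x1 = min N (y - 1)"
  have x1: "x1 \<le> y" "\<psi> x1 > - c/2" using N unfolding x1_def by auto
  define S where "S = {x1..y} \<inter> \<psi> -` {-c/2..}"
  have iC: "\<And>x. isCont \<psi> x" using cont by (simp add: continuous_on_eq_continuous_at)
  have clS: "closed S" unfolding S_def
    by (intro closed_Int closed_atLeastAtMost continuous_closed_vimage iC closed_atLeast)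
  have "x1 \<in> S" using x1 unfolding S_def by auto
  then have neS: "S \<noteq> {}" by auto
  have bdd: "bdd_above S" unfolding S_def by (rule bdd_aboveI[of _ y]) auto
  define z where "z = Sup S"
  have zS: "z \<in> S" unfolding z_def by (rule closed_contains_Sup[OF neS bdd clS])
  then have xz: "z \<le> y" and phz: "\<psi> z \<ge> - c/2" unfolding S_def by auto
  have above: "\<psi> s < - c/2" if "z < s" "s \<le> y" for s
  proof (rule ccontr)
    assume "\<not> \<psi> s < - c/2"
    then have "s \<in> S" using that zS unfolding S_def by auto
    then have "s \<le> z" unfolding z_def using bdd by (rule cSup_upper)
    then show False using that by simp
  qed
  have "0 \<le> integral\<^sup>L lborel (\<lambda>t. - (indicator {z..y} t *\<^sub>R \<psi> t))"
  proof (rule integral_nonneg_AE)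
    show "AE t in lborel. 0 \<le> - (indicator {z..y} t *\<^sub>R \<psi> t)"
      using AE_lborel_singleton[of z]
    proof eventually_elim
      case (elim t)
      then show ?case using above[of t] cpos
        by (auto split: split_indicator)
    qed
  qed
  then have "(LINT t:{z..y}|lborel. \<psi> t) \<le> 0"
    unfolding set_lebesgue_integral_def by simp
  with ineq[OF xz] have "\<psi> y \<ge> - c/2" using phz by simp
  with cpos show False unfolding c_def by simp
qed

lemma exp_abs_lim_top: "((\<lambda>x::real. exp (-\<bar>x-t\<bar>) * c) \<longlongrightarrow> 0) at_top"
  by real_asymp

lemma exp_abs_lim_bot: "((\<lambda>x::real. exp (-\<bar>-x-t\<bar>) * c) \<longlongrightarrow> 0) at_top"
  by real_asymp

lemma dct_at:
  fixes s :: "real \<Rightarrow> real \<Rightarrow> real" and g w :: "real \<Rightarrow> real"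
  assumes meas: "\<And>y. s y \<in> borel_measurable lborel" and gm: "g \<in> borel_measurable lborel"
    and wi: "integrable lborel w"
    and lim: "AE t in lborel. ((\<lambda>y. s y t) \<longlongrightarrow> g t) (at x)"
    and bound: "eventually (\<lambda>y. \<forall>t. \<bar>s y t\<bar> \<le> w t) (at x)"
  shows "((\<lambda>y. LINT t|lborel. s y t) \<longlongrightarrow> (LINT t|lborel. g t)) (at x)"
proof (subst tendsto_at_iff_sequentially, intro allI impI)
  fix X :: "nat \<Rightarrow> real" assume X1: "\<forall>i. X i \<in> UNIV - {x}" and X2: "X \<longlonglongrightarrow> x"
  have Xat: "filterlim X (at x) sequentially"
    using X1 X2 by (auto simp: filterlim_at)
  from filterlim_iff[THEN iffD1, OF Xat, rule_format, OF bound]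
  obtain N where N: "\<And>n. N \<le> n \<Longrightarrow> \<forall>t. \<bar>s (X n) t\<bar> \<le> w t"
    by (auto simp: eventually_sequentially)
  have "(\<lambda>n. LINT t|lborel. s (X (n + N)) t) \<longlonglongrightarrow> (LINT t|lborel. g t)"
  proof (rule integral_dominated_convergence[where w=w])
    show "AE t in lborel. norm (s (X (n + N)) t) \<le> w t" for n
      using N[of "n+N"] by auto
    show "AE t in lborel. (\<lambda>n. s (X (n + N)) t) \<longlonglongrightarrow> g t"
      using lim
    proof eventually_elim
      case (elim t)
      then show ?case
        by (intro LIMSEQ_ignore_initial_segment filterlim_compose[OF elim Xat])
    qed
  qed (use meas gm wi in auto)
  then show "((\<lambda>y. LINT t|lborel. s y t) \<circ> X) \<longlonglongrightarrow> (LINT t|lborel. g t)"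
    unfolding comp_def by (rule LIMSEQ_offset)
qed

definition dker :: "(real \<Rightarrow> real) \<Rightarrow> (real \<Rightarrow> real) \<Rightarrow> (real \<Rightarrow> real) \<Rightarrow> (real \<Rightarrow> real) \<Rightarrow> real \<Rightarrow> real \<Rightarrow> real" where
  "dker u u' v v' x t = (if t \<le> x then u' x * v t else u t * v' x)"

context
  fixes q u u' v v' :: "real \<Rightarrow> real"
  assumes adm: "admissible_potential q" and pf: "PFSS q u u' v v'"
begin

lemma u_der: "(u has_real_derivative u' x) (at x)"
  using pf unfolding PFSS_def is_solution_def by blast
lemma v_der: "(v has_real_derivative v' x) (at x)"
  using pf unfolding PFSS_def is_solution_def by blast
lemma u'_cont: "continuous_on UNIV u'"
  using pf unfolding PFSS_def is_solution_def by blast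
lemma v'_cont: "continuous_on UNIV v'"
  using pf unfolding PFSS_def is_solution_def by blast
lemma u_cont: "continuous_on UNIV u"
  using u_der by (auto simp: continuous_on_eq_continuous_at intro: DERIV_isCont)
lemma v_cont: "continuous_on UNIV v"
  using v_der by (auto simp: continuous_on_eq_continuous_at intro: DERIV_isCont)
lemma u_eq: "x \<le> y \<Longrightarrow> set_integrable lborel {x..y} (\<lambda>t. q t * u t) \<and>
        u' y - u' x = (LINT t:{x..y}|lborel. q t * u t)"
  using pf unfolding PFSS_def is_solution_def by blast
lemma v_eq: "x \<le> y \<Longrightarrow> set_integrable lborel {x..y} (\<lambda>t. q t * v t) \<and>
        v' y - v' x = (LINT t:{x..y}|lborel. q t * v t)"
  using pf unfolding PFSS_def is_solution_def by blast
lemma pos: "u x > 0" "v x > 0" "u' x < 0" "v' x > 0" "v' x * u x - u' x * v x = 1"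
  using pf unfolding PFSS_def by blast+
lemma lims: "(u \<longlongrightarrow> 0) at_top" "(u' \<longlongrightarrow> 0) at_top" "(v \<longlongrightarrow> 0) at_bot" "(v' \<longlongrightarrow> 0) at_bot"
  using pf unfolding PFSS_def by blast+
lemma q_ge: "AE x in lborel. 1 \<le> q x"
  using adm unfolding admissible_potential_def by blast

lemma FTC_gen:
  assumes "x \<le> y" "\<And>s. (F has_real_derivative F' s) (at s)" "continuous_on UNIV F'"
  shows "(LINT t:{x..y}|lborel. F' t) = F y - F x"
  unfolding set_lebesgue_integral_def
  apply (rule integral_FTC_atLeastAtMost[OF assms(1)])
   apply (rule has_vector_derivative_at_within)
  using assms(2) apply (simp add: has_real_derivative_iff_has_vector_derivative)
  using assms(3) continuous_on_subset apply blast
  done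

lemma sint_cont: "continuous_on UNIV g \<Longrightarrow> set_integrable lborel {x..y} (g::real\<Rightarrow>real)"
  by (rule borel_integrable_atLeastAtMost') (auto intro: continuous_on_subset)

lemma u_ineq: "u' x \<le> - u x"
proof -
  have "u x + u' x \<le> 0"
  proof (rule gronwall_top[of "\<lambda>x. u x + u' x"])
    show "continuous_on UNIV (\<lambda>x. u x + u' x)" by (intro continuous_intros u_cont u'_cont)
    show "((\<lambda>x. u x + u' x) \<longlongrightarrow> 0) at_top" using lims tendsto_add by fastforce
    fix x y :: real assume xy: "x \<le> y"
    have iu: "set_integrable lborel {x..y} u" by (rule sint_cont[OF u_cont])
    have iu': "set_integrable lborel {x..y} u'" by (rule sint_cont[OF u'_cont])
    have "(LINT t:{x..y}|lborel. u t + u' t) = (LINT t:{x..y}|lborel. u t) + (LINT t:{x..y}|lborel. u' t)"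
      using iu iu' by (rule set_integral_add)
    also have "(LINT t:{x..y}|lborel. u' t) = u y - u x" by (rule FTC_gen[OF xy u_der u'_cont])
    also have "(LINT t:{x..y}|lborel. u t) \<le> (LINT t:{x..y}|lborel. q t * u t)"
    proof (rule set_integral_mono_AE[OF iu conjunct1[OF u_eq[OF xy]]])
      show "AE t\<in>{x..y} in lborel. u t \<le> q t * u t"
        using q_ge
      proof eventually_elim
        case (elim t)
        then show ?case using pos(1)[of t] by (auto intro: mult_right_mono[of 1, simplified])
      qed
    qed
    also have "(LINT t:{x..y}|lborel. q t * u t) = u' y - u' x" using u_eq[OF xy] by simp
    finally show "(LINT t:{x..y}|lborel. u t + u' t) \<le> (u y + u' y) - (u x + u' x)" by simp
  qed
  then show ?thesis by simp
qed

lemma v_ineq: "v' x \<ge> v x"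
proof -
  have "v' x - v x \<ge> 0"
  proof (rule gronwall_bot[of "\<lambda>x. v' x - v x"])
    show "continuous_on UNIV (\<lambda>x. v' x - v x)" by (intro continuous_intros v_cont v'_cont)
    show "((\<lambda>x. v' x - v x) \<longlongrightarrow> 0) at_bot" using lims tendsto_diff by fastforce
    fix x y :: real assume xy: "x \<le> y"
    have iv: "set_integrable lborel {x..y} v" by (rule sint_cont[OF v_cont])
    have iv': "set_integrable lborel {x..y} v'" by (rule sint_cont[OF v'_cont])
    have e1: "(LINT t:{x..y}|lborel. v' t - v t) = (LINT t:{x..y}|lborel. v' t) - (LINT t:{x..y}|lborel. v t)"
      using iv' iv by (rule set_integral_diff)
    have e2: "(LINT t:{x..y}|lborel. v' t) = v y - v x" by (rule FTC_gen[OF xy v_der v'_cont])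
    have e3: "(LINT t:{x..y}|lborel. v t) \<le> (LINT t:{x..y}|lborel. q t * v t)"
    proof (rule set_integral_mono_AE[OF iv conjunct1[OF v_eq[OF xy]]])
      show "AE t\<in>{x..y} in lborel. v t \<le> q t * v t"
        using q_ge
      proof eventually_elim
        case (elim t)
        then show ?case using pos(2)[of t] by (auto intro: mult_right_mono[of 1, simplified])
      qed
    qed
    have e4: "(LINT t:{x..y}|lborel. q t * v t) = v' y - v' x" using v_eq[OF xy] by simp
    show "(v' y - v y) - (v' x - v x) \<ge> - (LINT t:{x..y}|lborel. v' t - v t)"
      using e1 e2 e3 e4 by linarith
  qed
  then show ?thesis by simp
qed

lemma u_decay: assumes "t \<le> z" shows "u z \<le> u t * exp (-(z-t))"
proof -
  have "exp z * u z \<le> exp t * u t"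
  proof (rule DERIV_nonpos_imp_nonincreasing[OF assms])
    fix s assume "t \<le> s" "s \<le> z"
    have "((\<lambda>s. exp s * u s) has_real_derivative (exp s * u s + exp s * u' s)) (at s)"
      by (rule derivative_eq_intros u_der refl | simp)+
    moreover have "exp s * u s + exp s * u' s \<le> 0"
      using u_ineq[of s] by (simp add: distrib_left[symmetric] mult_nonpos_nonneg[of "u s + u' s" "exp s", simplified mult.commute])
    ultimately show "\<exists>y. ((\<lambda>s. exp s * u s) has_real_derivative y) (at s) \<and> y \<le> 0" by blast
  qed
  then have "u z \<le> exp t * u t / exp z" by (simp add: field_simps)
  also have "\<dots> = u t * exp (-(z-t))" by (simp add: exp_diff exp_minus field_simps)
  finally show ?thesis .
qed

lemma v_decay: assumes "t \<le> z" shows "v t \<le> v z * exp (-(z-t))"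
proof -
  have "exp (-t) * v t \<le> exp (-z) * v z"
  proof (rule DERIV_nonneg_imp_nondecreasing[OF assms])
    fix s assume "t \<le> s" "s \<le> z"
    have "((\<lambda>s. exp (-s) * v s) has_real_derivative (exp (-s) * (v' s - v s))) (at s)"
      by (rule derivative_eq_intros v_der refl | simp add: algebra_simps)+
    moreover have "exp (-s) * (v' s - v s) \<ge> 0"
      using v_ineq[of s] by simp
    ultimately show "\<exists>y. ((\<lambda>s. exp (-s) * v s) has_real_derivative y) (at s) \<and> y \<ge> 0" by blast
  qed
  then have "v t \<le> exp (-z) * v z / exp (-t)" by (simp add: field_simps)
  also have "\<dots> = v z * exp (-(z-t))" by (simp add: exp_diff exp_minus field_simps)
  finally show ?thesis .
qed

lemma uv_le: "u x * v x \<le> 1/2"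
proof -
  have a: "v x * u x \<le> v' x * u x" using pos(1)[of x] v_ineq[of x] by (simp add: mult_right_mono)
  have b: "u x * v x \<le> (- u' x) * v x" using pos(2)[of x] u_ineq[of x] by (intro mult_right_mono) auto
  show ?thesis using a b pos(5)[of x] by (simp add: algebra_simps)
qed

lemma u'v_le: "- u' x * v x \<le> 1"
proof -
  have "0 < v' x * u x" using pos[of x] by simp
  then show ?thesis using pos(5)[of x] by linarith
qed

lemma v'u_le: "v' x * u x \<le> 1"
proof -
  have "u' x * v x < 0" using pos[of x] by (simp add: mult_neg_pos)
  then show ?thesis using pos(5)[of x] by linarith
qed

lemma green_nonneg: "0 \<le> green u v x t"
  using pos(1,2) by (simp add: green_def less_imp_le)

lemma green_le: "green u v x t \<le> exp (-\<bar>x-t\<bar>) / 2"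
proof (cases "t \<le> x")
  case True
  have "u x * v t \<le> u x * (v x * exp (-(x-t)))"
    using v_decay[OF True] pos(1)[of x] by (intro mult_left_mono) auto
  also have "\<dots> = (u x * v x) * exp (-(x-t))" by simp
  also have "\<dots> \<le> (1/2) * exp (-(x-t))" using uv_le[of x] by (intro mult_right_mono) auto
  finally show ?thesis using True by (simp add: green_def)
next
  case False
  then have tx: "x \<le> t" by simp
  have "u t * v x \<le> (u x * exp (-(t-x))) * v x"
    using u_decay[OF tx] pos(2)[of x] by (intro mult_right_mono) auto
  also have "\<dots> = (u x * v x) * exp (-(t-x))" by simp
  also have "\<dots> \<le> (1/2) * exp (-(t-x))" using uv_le[of x] by (intro mult_right_mono) auto
  finally show ?thesis using False by (simp add: green_def)
qed

lemma dker_bound: "\<bar>dker u u' v v' x t\<bar> \<le> exp (-\<bar>x-t\<bar>)"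
proof (cases "t \<le> x")
  case True
  have "\<bar>u' x * v t\<bar> = (- u' x) * v t" using pos[of x] pos(2)[of t] by (simp add: abs_mult)
  also have "\<dots> \<le> (- u' x) * (v x * exp (-(x-t)))"
    using v_decay[OF True] pos(3)[of x] by (intro mult_left_mono) auto
  also have "\<dots> = (- u' x * v x) * exp (-(x-t))" by simp
  also have "\<dots> \<le> 1 * exp (-(x-t))" using u'v_le[of x] by (intro mult_right_mono) auto
  finally show ?thesis using True by (simp add: dker_def)
next
  case False
  then have tx: "x \<le> t" by simp
  have "\<bar>u t * v' x\<bar> = u t * v' x" using pos[of x] pos(1)[of t] by (simp add: abs_mult)
  also have "\<dots> \<le> (u x * exp (-(t-x))) * v' x"
    using u_decay[OF tx] pos(4)[of x] by (intro mult_right_mono) auto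
  also have "\<dots> = (v' x * u x) * exp (-(t-x))" by simp
  also have "\<dots> \<le> 1 * exp (-(t-x))" using v'u_le[of x] by (intro mult_right_mono) auto
  finally show ?thesis using False by (simp add: dker_def)
qed

lemma M1: assumes "t \<le> a" "a \<le> b" shows "\<bar>u b - u a\<bar> * v t \<le> (b-a) * exp (-(a-t))"
proof (cases "a = b")
  case False
  then have ab: "a < b" using assms by simp
  obtain z where z: "a < z" "z < b" "u b - u a = (b - a) * u' z"
    using MVT2[OF ab, of u u'] u_der by blast
  have "\<bar>u b - u a\<bar> * v t = (b - a) * ((- u' z) * v t)"
    using z pos(3)[of z] ab by (simp add: abs_mult)
  also have "(- u' z) * v t \<le> (- u' z) * (v z * exp (-(z-t)))"
    using v_decay[of t z] assms z pos(3)[of z] by (intro mult_left_mono) auto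
  also have "\<dots> = (- u' z * v z) * exp (-(z-t))" by simp
  also have "\<dots> \<le> 1 * exp (-(a-t))"
    using u'v_le[of z] z by (intro mult_mono) auto
  finally show ?thesis using ab by (simp add: mult_left_mono)
qed simp

lemma M2: assumes "a \<le> b" "b \<le> t" shows "\<bar>v b - v a\<bar> * u t \<le> (b-a) * exp (-(t-b))"
proof (cases "a = b")
  case False
  then have ab: "a < b" using assms by simp
  obtain z where z: "a < z" "z < b" "v b - v a = (b - a) * v' z"
    using MVT2[OF ab, of v v'] v_der by blast
  have "\<bar>v b - v a\<bar> * u t = (b - a) * (v' z * u t)"
    using z pos(4)[of z] ab by (simp add: abs_mult)
  also have "v' z * u t \<le> v' z * (u z * exp (-(t-z)))"
    using u_decay[of z t] assms z pos(4)[of z] by (intro mult_left_mono) auto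
  also have "\<dots> = (v' z * u z) * exp (-(t-z))" by simp
  also have "\<dots> \<le> 1 * exp (-(t-b))"
    using v'u_le[of z] z by (intro mult_mono) auto
  finally show ?thesis using ab by (simp add: mult_left_mono)
qed simp

lemma green_diff0:
  assumes "a \<le> b"
  shows "\<bar>green u v b t - green u v a t\<bar> \<le> (b-a) *
     (if t \<le> a then exp (-(a-t)) else if b < t then exp (-(t-b)) else 1)"
proof -
  consider "t \<le> a" | "b < t" | "a < t" "t \<le> b" by linarith
  then show ?thesis
  proof cases
    case 1
    then have "\<bar>green u v b t - green u v a t\<bar> = \<bar>u b - u a\<bar> * v t"
      using assms pos(2)[of t] by (simp add: green_def) (metis abs_mult abs_of_pos left_diff_distrib)
    then show ?thesis using M1[OF 1 assms] 1 by simp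
  next
    case 2
    then have "\<bar>green u v b t - green u v a t\<bar> = \<bar>v b - v a\<bar> * u t"
      using assms pos(1)[of t] by (simp add: green_def) (metis abs_mult abs_of_pos right_diff_distrib mult.commute)
    then show ?thesis using M2[OF assms, of t] 2 assms by simp
  next
    case 3
    have e: "green u v b t - green u v a t = (u b - u t) * v t + (v t - v a) * u t"
      using 3 by (simp add: green_def algebra_simps)
    have "\<bar>u b - u t\<bar> * v t \<le> (b - t) * exp (-(t-t))" using M1[of t t b] 3 by simp
    moreover have "\<bar>v t - v a\<bar> * u t \<le> (t - a) * exp (-(t-t))" using M2[of a t t] 3 by simp
    moreover have "\<bar>green u v b t - green u v a t\<bar> \<le> \<bar>u b - u t\<bar> * v t + \<bar>v t - v a\<bar> * u t"
      unfolding e using pos(1,2)[of t] abs_triangle_ineq[of "(u b - u t) * v t" "(v t - v a) * u t"]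
      by (simp add: abs_mult)
    ultimately show ?thesis using 3 by simp
  qed
qed

lemma green_diff:
  assumes "\<bar>y - x\<bar> \<le> 1"
  shows "\<bar>green u v y t - green u v x t\<bar> \<le> exp 1 * \<bar>y-x\<bar> * exp (-\<bar>x-t\<bar>)"
proof -
  define a where "a = min x y"
  define b where "b = max x y"
  have ab: "a \<le> b" unfolding a_def b_def by simp
  have eq: "\<bar>green u v y t - green u v x t\<bar> = \<bar>green u v b t - green u v a t\<bar>"
    unfolding a_def b_def by (cases "x \<le> y") (simp_all add: abs_minus_commute)
  have ba: "b - a = \<bar>y - x\<bar>" unfolding a_def b_def by simp
  have E: "(if t \<le> a then exp (-(a-t)) else if b < t then exp (-(t-b)) else 1) \<le> exp 1 * exp (-\<bar>x-t\<bar>)"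
  proof -
    have ee: "exp 1 * exp (-\<bar>x-t\<bar>) = exp (1 - \<bar>x-t\<bar>)" by (simp add: exp_add[symmetric])
    consider "t \<le> a" | "b < t" | "a < t" "t \<le> b" by linarith
    then have "(if t \<le> a then exp (-(a-t)) else if b < t then exp (-(t-b)) else 1) \<le> exp (1 - \<bar>x-t\<bar>)"
    proof cases
      case 1
      have h: "-(a-t) \<le> 1 - \<bar>x-t\<bar>" using 1 assms unfolding a_def by auto
      have "exp (-(a-t)) \<le> exp (1 - \<bar>x-t\<bar>)" by (rule exp_le_cancel_iff[THEN iffD2, OF h])
      then show ?thesis using 1 by simp
    next
      case 2
      have h: "-(t-b) \<le> 1 - \<bar>x-t\<bar>" using 2 assms unfolding b_def by auto
      have "exp (-(t-b)) \<le> exp (1 - \<bar>x-t\<bar>)" by (rule exp_le_cancel_iff[THEN iffD2, OF h])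
      then show ?thesis using 2 ab by simp
    next
      case 3
      have h: "0 \<le> 1 - \<bar>x-t\<bar>" using 3 assms unfolding a_def b_def by auto
      have "exp (0) \<le> exp (1 - \<bar>x-t\<bar>)" by (rule exp_le_cancel_iff[THEN iffD2, OF h])
      then show ?thesis using 3 by simp
    qed
    then show ?thesis unfolding ee .
  qed
  have "\<bar>green u v y t - green u v x t\<bar> \<le> (b-a) * (exp 1 * exp (-\<bar>x-t\<bar>))"
    unfolding eq using green_diff0[OF ab, of t] E ab
    by (meson mult_left_mono diff_ge_0_iff_ge order_trans)
  then show ?thesis unfolding ba by (simp add: mult_ac)
qed

end

lemma pt_bound:
  fixes a p e :: real assumes "1 \<le> p" "0 < e"
  shows "\<bar>a\<bar> \<le> e + e powr (1-p) * \<bar>a\<bar> powr p"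
proof (cases "\<bar>a\<bar> \<le> e")
  case True
  then show ?thesis by (smt (verit) mult_nonneg_nonneg powr_ge_zero)
next
  case False
  then have ae: "e < \<bar>a\<bar>" by simp
  have "\<bar>a\<bar> powr p = \<bar>a\<bar> * \<bar>a\<bar> powr (p-1)" using ae assms by (simp add: powr_diff)
  also have "\<dots> \<ge> \<bar>a\<bar> * e powr (p-1)"
    using ae assms by (auto intro!: mult_left_mono powr_mono2)
  finally have "e powr (1-p) * \<bar>a\<bar> powr p \<ge> e powr (1-p) * (\<bar>a\<bar> * e powr (p-1))"
    using assms by (intro mult_left_mono) auto
  also have "e powr (1-p) * (\<bar>a\<bar> * e powr (p-1)) = \<bar>a\<bar>"
    using assms by (simp add: powr_add[symmetric] mult.left_commute)
  finally show ?thesis using assms by simp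
qed

context
  fixes q u u' v v' f :: "real \<Rightarrow> real" and p :: real
  assumes adm: "admissible_potential q" and pf: "PFSS q u u' v v'"
    and p1: "1 \<le> p" and fL: "in_Lp p f"
begin

lemma f_meas[measurable]: "f \<in> borel_measurable borel"
  using fL unfolding in_Lp_def by simp
lemma fp_int: "integrable lborel (\<lambda>t. \<bar>f t\<bar> powr p)"
  using fL unfolding in_Lp_def by simp
lemma u_meas[measurable]: "u \<in> borel_measurable borel"
  by (rule borel_measurable_continuous_onI[OF u_cont[OF adm pf]])
lemma v_meas[measurable]: "v \<in> borel_measurable borel"
  by (rule borel_measurable_continuous_onI[OF v_cont[OF adm pf]])

lemma w_int: "integrable lborel (\<lambda>t. exp (-\<bar>x-t\<bar>) * \<bar>f t\<bar>)"
proof (rule Bochner_Integration.integrable_bound)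
  show "integrable lborel (\<lambda>t. exp (-\<bar>x-t\<bar>) + \<bar>f t\<bar> powr p)"
    by (intro Bochner_Integration.integrable_add kern_shift_integrable fp_int)
  show "(\<lambda>t. exp (-\<bar>x-t\<bar>) * \<bar>f t\<bar>) \<in> borel_measurable lborel" by measurable
  show "AE t in lborel. norm (exp (-\<bar>x-t\<bar>) * \<bar>f t\<bar>) \<le> norm (exp (-\<bar>x-t\<bar>) + \<bar>f t\<bar> powr p)"
  proof (rule AE_I2)
    fix t
    have e1: "exp (-\<bar>x-t\<bar>) \<le> 1" by simp
    have "\<bar>f t\<bar> \<le> 1 + \<bar>f t\<bar> powr p" using pt_bound[OF p1, of 1 "f t"] by simp
    then have "exp (-\<bar>x-t\<bar>) * \<bar>f t\<bar> \<le> exp (-\<bar>x-t\<bar>) * (1 + \<bar>f t\<bar> powr p)"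
      by (intro mult_left_mono) auto
    also have "\<dots> \<le> exp (-\<bar>x-t\<bar>) + \<bar>f t\<bar> powr p"
      using e1 by (simp add: distrib_left mult_left_le_one_le)
    finally show "norm (exp (-\<bar>x-t\<bar>) * \<bar>f t\<bar>) \<le> norm (exp (-\<bar>x-t\<bar>) + \<bar>f t\<bar> powr p)" by simp
  qed
qed

lemma green_meas[measurable]: "(\<lambda>t. green u v x t) \<in> borel_measurable borel"
  unfolding green_def by measurable

lemma dker_meas[measurable]: "(\<lambda>t. dker u u' v v' x t) \<in> borel_measurable borel"
  unfolding dker_def by measurable

lemma int_green: "integrable lborel (\<lambda>t. green u v x t * f t)"
proof (rule Bochner_Integration.integrable_bound[OF w_int[of x]])
  show "(\<lambda>t. green u v x t * f t) \<in> borel_measurable lborel" by measurable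
  show "AE t in lborel. norm (green u v x t * f t) \<le> norm (exp (-\<bar>x-t\<bar>) * \<bar>f t\<bar>)"
  proof (rule AE_I2)
    fix t
    have "\<bar>green u v x t\<bar> \<le> exp (-\<bar>x-t\<bar>)"
      using green_le[OF adm pf, of x t] green_nonneg[OF adm pf, of x t] by simp
    then show "norm (green u v x t * f t) \<le> norm (exp (-\<bar>x-t\<bar>) * \<bar>f t\<bar>)"
      by (simp add: abs_mult mult_right_mono)
  qed
qed

lemma int_dker: "integrable lborel (\<lambda>t. dker u u' v v' x t * f t)"
proof (rule Bochner_Integration.integrable_bound[OF w_int[of x]])
  show "(\<lambda>t. dker u u' v v' x t * f t) \<in> borel_measurable lborel" by measurable
  show "AE t in lborel. norm (dker u u' v v' x t * f t) \<le> norm (exp (-\<bar>x-t\<bar>) * \<bar>f t\<bar>)"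
  proof (rule AE_I2)
    fix t
    show "norm (dker u u' v v' x t * f t) \<le> norm (exp (-\<bar>x-t\<bar>) * \<bar>f t\<bar>)"
      using dker_bound[OF adm pf, of x t] by (simp add: abs_mult mult_right_mono)
  qed
qed

lemma green_pt_deriv:
  assumes "t \<noteq> x"
  shows "((\<lambda>y. green u v y t * f t) has_real_derivative dker u u' v v' x t * f t) (at x)"
proof (cases "t < x")
  case True
  have ev: "eventually (\<lambda>y. green u v y t * f t = u y * v t * f t) (nhds x)"
  proof -
    have "eventually (\<lambda>y. y \<in> {t<..}) (nhds x)"
      by (rule eventually_nhds_in_open) (use True in auto)
    then show ?thesis by (rule eventually_mono) (auto simp: green_def)
  qed
  have "((\<lambda>y. u y * v t * f t) has_real_derivative u' x * v t * f t) (at x)"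
    by (intro DERIV_cmult_right u_der[OF adm pf])
  then show ?thesis using True
    by (subst DERIV_cong_ev[OF refl ev refl]) (simp add: dker_def)
next
  case False
  then have tx: "x < t" using assms by simp
  have ev: "eventually (\<lambda>y. green u v y t * f t = u t * v y * f t) (nhds x)"
  proof -
    have "eventually (\<lambda>y. y \<in> {..<t}) (nhds x)"
      by (rule eventually_nhds_in_open) (use tx in auto)
    then show ?thesis by (rule eventually_mono) (auto simp: green_def)
  qed
  have "((\<lambda>y. u t * v y * f t) has_real_derivative u t * v' x * f t) (at x)"
    using DERIV_cmult_right[OF DERIV_cmult[OF v_der[OF adm pf], of "u t"], of "f t"] by simp
  then show ?thesis using tx
    by (subst DERIV_cong_ev[OF refl ev refl]) (simp add: dker_def)
qed

lemma green_op_deriv: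
  "(green_op u v f has_real_derivative (LINT t|lborel. dker u u' v v' x t * f t)) (at x)"
proof -
  define s where "s y t = (green u v y t * f t - green u v x t * f t) / (y - x)" for y t
  have eq: "(green_op u v f y - green_op u v f x) / (y - x) = (LINT t|lborel. s y t)" for y
    unfolding s_def green_op_def
    by (simp add: Bochner_Integration.integral_diff[OF int_green int_green])
  have "((\<lambda>y. LINT t|lborel. s y t) \<longlongrightarrow> (LINT t|lborel. dker u u' v v' x t * f t)) (at x)"
  proof (rule dct_at[where w = "\<lambda>t. exp 1 * (exp (-\<bar>x-t\<bar>) * \<bar>f t\<bar>)"])
    show "s y \<in> borel_measurable lborel" for y
      unfolding s_def by measurable
    show "(\<lambda>t. dker u u' v v' x t * f t) \<in> borel_measurable lborel"
      by measurable
    show "integrable lborel (\<lambda>t. exp 1 * (exp (-\<bar>x-t\<bar>) * \<bar>f t\<bar>))"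
      using w_int[of x] by simp
    show "AE t in lborel. ((\<lambda>y. s y t) \<longlongrightarrow> dker u u' v v' x t * f t) (at x)"
      using AE_lborel_singleton[of x]
    proof eventually_elim
      case (elim t)
      then show ?case
        using green_pt_deriv[of t x] unfolding s_def has_field_derivative_iff by auto
    qed
    have "eventually (\<lambda>y. \<bar>y - x\<bar> < 1 \<and> y \<noteq> x) (at x)"
      unfolding eventually_at by (rule exI[of _ 1]) (auto simp: dist_real_def)
    then show "eventually (\<lambda>y. \<forall>t. \<bar>s y t\<bar> \<le> exp 1 * (exp (-\<bar>x-t\<bar>) * \<bar>f t\<bar>)) (at x)"
    proof eventually_elim
      case (elim y)
      show ?case
      proof
        fix t
        have d: "\<bar>green u v y t - green u v x t\<bar> \<le> exp 1 * \<bar>y-x\<bar> * exp (-\<bar>x-t\<bar>)"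
          using green_diff[OF adm pf, of y x t] elim by simp
        have "\<bar>s y t\<bar> = \<bar>green u v y t - green u v x t\<bar> * \<bar>f t\<bar> / \<bar>y - x\<bar>"
          unfolding s_def by (simp add: abs_mult left_diff_distrib[symmetric])
        also have "\<dots> \<le> exp 1 * \<bar>y-x\<bar> * exp (-\<bar>x-t\<bar>) * \<bar>f t\<bar> / \<bar>y - x\<bar>"
          using d by (intro divide_right_mono mult_right_mono) auto
        also have "\<dots> = exp 1 * (exp (-\<bar>x-t\<bar>) * \<bar>f t\<bar>)" using elim by simp
        finally show "\<bar>s y t\<bar> \<le> exp 1 * (exp (-\<bar>x-t\<bar>) * \<bar>f t\<bar>)" .
      qed
    qed
  qed
  then show ?thesis unfolding has_field_derivative_iff eq .
qed


lemma wp_int: "integrable lborel (\<lambda>t. exp (-\<bar>x-t\<bar>) * \<bar>f t\<bar> powr p)"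
proof (rule Bochner_Integration.integrable_bound[OF fp_int])
  show "(\<lambda>t. exp (-\<bar>x-t\<bar>) * \<bar>f t\<bar> powr p) \<in> borel_measurable lborel" by measurable
  show "AE t in lborel. norm (exp (-\<bar>x-t\<bar>) * \<bar>f t\<bar> powr p) \<le> norm (\<bar>f t\<bar> powr p)"
    by (rule AE_I2) (simp add: mult_left_le_one_le)
qed

lemma J_lim: "((\<lambda>x. LINT t|lborel. exp (-\<bar>x-t\<bar>) * \<bar>f t\<bar> powr p) \<longlongrightarrow> 0) at_infinity"
  unfolding at_infinity_eq_at_top_bot
proof (rule filterlim_sup)
  show "((\<lambda>x. LINT t|lborel. exp (-\<bar>x-t\<bar>) * \<bar>f t\<bar> powr p) \<longlongrightarrow> 0) at_top"
    using integral_dominated_convergence_at_top[where s="\<lambda>x t. exp (-\<bar>x-t\<bar>) * \<bar>f t\<bar> powr p"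
        and f="\<lambda>t. 0" and w="\<lambda>t. \<bar>f t\<bar> powr p" and M=lborel]
    by (simp add: fp_int exp_abs_lim_top mult_left_le_one_le)
  have "((\<lambda>x. LINT t|lborel. exp (-\<bar>-x-t\<bar>) * \<bar>f t\<bar> powr p) \<longlongrightarrow> 0) at_top"
    using integral_dominated_convergence_at_top[where s="\<lambda>x t. exp (-\<bar>-x-t\<bar>) * \<bar>f t\<bar> powr p"
        and f="\<lambda>t. 0" and w="\<lambda>t. \<bar>f t\<bar> powr p" and M=lborel]
    by (simp add: fp_int exp_abs_lim_bot mult_left_le_one_le)
  then show "((\<lambda>x. LINT t|lborel. exp (-\<bar>x-t\<bar>) * \<bar>f t\<bar> powr p) \<longlongrightarrow> 0) at_bot"
    unfolding filterlim_at_bot_mirror by simp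
qed

lemma H_le:
  assumes e: "0 < e"
  shows "(LINT t|lborel. exp (-\<bar>x-t\<bar>) * \<bar>f t\<bar>) \<le>
    e * (LINT s|lborel. exp (-\<bar>s\<bar>)) + e powr (1-p) * (LINT t|lborel. exp (-\<bar>x-t\<bar>) * \<bar>f t\<bar> powr p)"
proof -
  have "(LINT t|lborel. exp (-\<bar>x-t\<bar>) * \<bar>f t\<bar>) \<le>
        (LINT t|lborel. e * exp (-\<bar>x-t\<bar>) + e powr (1-p) * (exp (-\<bar>x-t\<bar>) * \<bar>f t\<bar> powr p))"
  proof (rule integral_mono)
    show "integrable lborel (\<lambda>t. exp (-\<bar>x-t\<bar>) * \<bar>f t\<bar>)" by (rule w_int)
    show "integrable lborel (\<lambda>t. e * exp (-\<bar>x-t\<bar>) + e powr (1-p) * (exp (-\<bar>x-t\<bar>) * \<bar>f t\<bar> powr p))"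
      by (intro Bochner_Integration.integrable_add integrable_mult_right kern_shift_integrable wp_int)
    fix t
    have "exp (-\<bar>x-t\<bar>) * \<bar>f t\<bar> \<le> exp (-\<bar>x-t\<bar>) * (e + e powr (1-p) * \<bar>f t\<bar> powr p)"
      using pt_bound[OF p1 e, of "f t"] by (intro mult_left_mono) auto
    then show "exp (-\<bar>x-t\<bar>) * \<bar>f t\<bar> \<le> e * exp (-\<bar>x-t\<bar>) + e powr (1-p) * (exp (-\<bar>x-t\<bar>) * \<bar>f t\<bar> powr p)"
      by (simp add: algebra_simps)
  qed
  also have "\<dots> = e * (LINT t|lborel. exp (-\<bar>x-t\<bar>)) + e powr (1-p) * (LINT t|lborel. exp (-\<bar>x-t\<bar>) * \<bar>f t\<bar> powr p)"
    by (subst Bochner_Integration.integral_add) (auto intro!: kern_shift_integrable wp_int)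
  also have "(LINT t|lborel. exp (-\<bar>x-t\<bar>)) = (LINT s|lborel. exp (-\<bar>s\<bar>))" by (rule kern_shift_integral)
  finally show ?thesis .
qed

lemma H_lim: "((\<lambda>x. LINT t|lborel. exp (-\<bar>x-t\<bar>) * \<bar>f t\<bar>) \<longlongrightarrow> 0) at_infinity"
proof (rule tendstoI)
  fix d :: real assume d: "0 < d"
  define c0 where "c0 = (LINT s|lborel. exp (-\<bar>s::real\<bar>))"
  have c0: "0 \<le> c0" unfolding c0_def by (rule integral_nonneg_AE) auto
  define e where "e = d / (2 * (c0 + 1))"
  have e: "0 < e" unfolding e_def using d c0 by simp
  have ec0: "e * c0 < d / 2"
  proof -
    have "e * c0 = (d/2) * (c0 / (c0 + 1))" unfolding e_def by (simp add: field_simps)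
    also have "\<dots> < (d/2) * 1" using d c0 by (intro mult_strict_left_mono) auto
    finally show ?thesis by simp
  qed
  have ep: "0 < e powr (1-p)" using e by simp
  have "eventually (\<lambda>x. dist (LINT t|lborel. exp (-\<bar>x-t\<bar>) * \<bar>f t\<bar> powr p) 0 < (d/2) / e powr (1-p)) at_infinity"
    using J_lim ep d by (intro tendstoD) auto
  then show "eventually (\<lambda>x. dist (LINT t|lborel. exp (-\<bar>x-t\<bar>) * \<bar>f t\<bar>) 0 < d) at_infinity"
  proof eventually_elim
    case (elim x)
    define J where "J = (LINT t|lborel. exp (-\<bar>x-t\<bar>) * \<bar>f t\<bar> powr p)"
    define H where "H = (LINT t|lborel. exp (-\<bar>x-t\<bar>) * \<bar>f t\<bar>)"
    have H0: "0 \<le> H" unfolding H_def by (rule integral_nonneg_AE) auto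
    have HJ: "H \<le> e * c0 + e powr (1-p) * J" unfolding H_def J_def c0_def by (rule H_le[OF e])
    have "J < (d/2) / e powr (1-p)" using elim unfolding J_def by simp
    then have "e powr (1-p) * J < d/2" using ep by (simp add: field_simps)
    then have "H < d" using HJ ec0 by linarith
    then show ?case using H0 unfolding H_def by simp
  qed
qed

lemma Gf_le: "\<bar>green_op u v f x\<bar> \<le> (LINT t|lborel. exp (-\<bar>x-t\<bar>) * \<bar>f t\<bar>)"
proof -
  have "\<bar>green_op u v f x\<bar> \<le> (LINT t|lborel. norm (green u v x t * f t))"
    unfolding green_op_def using integral_norm_bound[of lborel "\<lambda>t. green u v x t * f t"] by simp
  also have "\<dots> \<le> (LINT t|lborel. exp (-\<bar>x-t\<bar>) * \<bar>f t\<bar>)"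
  proof (rule integral_mono)
    show "integrable lborel (\<lambda>t. norm (green u v x t * f t))" using int_green by simp
    show "integrable lborel (\<lambda>t. exp (-\<bar>x-t\<bar>) * \<bar>f t\<bar>)" by (rule w_int)
    fix t
    have "\<bar>green u v x t\<bar> \<le> exp (-\<bar>x-t\<bar>)"
      using green_le[OF adm pf, of x t] green_nonneg[OF adm pf, of x t] by simp
    then show "norm (green u v x t * f t) \<le> exp (-\<bar>x-t\<bar>) * \<bar>f t\<bar>"
      by (simp add: abs_mult mult_right_mono)
  qed
  finally show ?thesis .
qed

lemma Df_le: "\<bar>LINT t|lborel. dker u u' v v' x t * f t\<bar> \<le> (LINT t|lborel. exp (-\<bar>x-t\<bar>) * \<bar>f t\<bar>)"
proof -
  have "\<bar>LINT t|lborel. dker u u' v v' x t * f t\<bar> \<le> (LINT t|lborel. norm (dker u u' v v' x t * f t))"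
    using integral_norm_bound[of lborel "\<lambda>t. dker u u' v v' x t * f t"] by simp
  also have "\<dots> \<le> (LINT t|lborel. exp (-\<bar>x-t\<bar>) * \<bar>f t\<bar>)"
  proof (rule integral_mono)
    show "integrable lborel (\<lambda>t. norm (dker u u' v v' x t * f t))" using int_dker by simp
    show "integrable lborel (\<lambda>t. exp (-\<bar>x-t\<bar>) * \<bar>f t\<bar>)" by (rule w_int)
    fix t
    show "norm (dker u u' v v' x t * f t) \<le> exp (-\<bar>x-t\<bar>) * \<bar>f t\<bar>"
      using dker_bound[OF adm pf, of x t] by (simp add: abs_mult mult_right_mono)
  qed
  finally show ?thesis .
qed

lemma main_result:
  "(\<forall>x. integrable lborel (\<lambda>t. green u v x t * f t)) \<and>
   (green_op u v f \<longlongrightarrow> 0) at_infinity \<and>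
   (\<forall>x. green_op u v f differentiable at x) \<and>
   ((\<lambda>x. deriv (green_op u v f) x) \<longlongrightarrow> 0) at_infinity"
proof (intro conjI allI)
  show "integrable lborel (\<lambda>t. green u v x t * f t)" for x by (rule int_green)
  show "(green_op u v f \<longlongrightarrow> 0) at_infinity"
    by (rule Lim_null_comparison[OF always_eventually H_lim]) (use Gf_le in simp)
  show "green_op u v f differentiable at x" for x
    using green_op_deriv[of x] real_differentiable_def by blast
  have "deriv (green_op u v f) x = (LINT t|lborel. dker u u' v v' x t * f t)" for x
    by (rule DERIV_imp_deriv[OF green_op_deriv])
  then show "((\<lambda>x. deriv (green_op u v f) x) \<longlongrightarrow> 0) at_infinity"
    by (intro Lim_null_comparison[OF always_eventually H_lim]) (use Df_le in simp)
qed
end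

theorem lemma3p4:
  fixes q u u' v v' f :: "real \<Rightarrow> real" and p :: real
  assumes "admissible_potential q"
    and "PFSS q u u' v v'"
    and "1 \<le> p"
    and "in_Lp p f"
  shows "(\<forall>x. integrable lborel (\<lambda>t. green u v x t * f t)) \<and>
         (green_op u v f \<longlongrightarrow> 0) at_infinity \<and>
         (\<forall>x. green_op u v f differentiable at x) \<and>
         ((\<lambda>x. deriv (green_op u v f) x) \<longlongrightarrow> 0) at_infinity"
  using main_result[OF assms] .

end
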